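(* Let $X$ be a Tychonoff space containing a countably infinite subset $N$ such that (1) $N$ is not nowhere dense in $X$; (2) $X\setminus N$ is dense in $X$; (3) each singleton subset of $N$ is a zero set in $X$. Then $T''(X)$ is not closed under uniform limits (there is a sequence in $T''(X)$ converging uniformly on $X$ to a function not in $T''(X)$), and hence $T''(X)$ is not ring-isomorphic to $C(Y)$ for any topological space $Y$.
   Context: $C(X)$ is the ring of real-valued continuous functions on $X$. A zero set is a set $Z(g)=\{x: g(x)=0\}$ with $g\in C(X)$, and a cozero set is its complement $coz(g)$. $T''(X)$ is the ring (under pointwise operations) of all functions $f\colon X\to\mathbb{R}$ for which there is a dense cozero set $U$ of $X$ with $f|_U$ continuous. *)

theory Defs
  imports "HOL-Analysis.Analysis"
begin

definition tychonoff_space :: "'a topology \<Rightarrow> bool" where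
  "tychonoff_space X \<longleftrightarrow> completely_regular_space X \<and> Hausdorff_space X"

definition zero_set :: "'a topology \<Rightarrow> ('a \<Rightarrow> real) \<Rightarrow> 'a set" where
  "zero_set X g = {x \<in> topspace X. g x = 0}"

definition is_zero_set :: "'a topology \<Rightarrow> 'a set \<Rightarrow> bool" where
  "is_zero_set X Z \<longleftrightarrow> (\<exists>g. continuous_map X euclideanreal g \<and> Z = zero_set X g)"

definition is_cozero_set :: "'a topology \<Rightarrow> 'a set \<Rightarrow> bool" where
  "is_cozero_set X U \<longleftrightarrow>
     (\<exists>g. continuous_map X euclideanreal g \<and> U = topspace X - zero_set X g)"

definition dense_in :: "'a topology \<Rightarrow> 'a set \<Rightarrow> bool" where
  "dense_in X S \<longleftrightarrow> X closure_of S = topspace X"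

definition nowhere_dense_in :: "'a topology \<Rightarrow> 'a set \<Rightarrow> bool" where
  "nowhere_dense_in X S \<longleftrightarrow> X interior_of (X closure_of S) = {}"

text \<open>f : X \<rightarrow> R belongs to T''(X): continuous on some dense cozero set
  (only the values on topspace X matter).\<close>
definition in_T2 :: "'a topology \<Rightarrow> ('a \<Rightarrow> real) \<Rightarrow> bool" where
  "in_T2 X f \<longleftrightarrow> (\<exists>U. is_cozero_set X U \<and> dense_in X U \<and>
                        continuous_map (subtopology X U) euclideanreal f)"

text \<open>Rings of functions on X, represented extensionally (value 0 off topspace X),
  with pointwise operations.\<close>
definition T2_ring :: "'a topology \<Rightarrow> ('a \<Rightarrow> real) set" where
  "T2_ring X = {f. in_T2 X f \<and> (\<forall>x. x \<notin> topspace X \<longrightarrow> f x = 0)}"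

definition C_ring :: "'a topology \<Rightarrow> ('a \<Rightarrow> real) set" where
  "C_ring X = {f. continuous_map X euclideanreal f \<and> (\<forall>x. x \<notin> topspace X \<longrightarrow> f x = 0)}"

definition ring_isomorphic :: "('a \<Rightarrow> real) set \<Rightarrow> ('b \<Rightarrow> real) set \<Rightarrow> bool" where
  "ring_isomorphic A B \<longleftrightarrow> (\<exists>\<phi>. bij_betw \<phi> A B \<and>
     (\<forall>f\<in>A. \<forall>g\<in>A. \<phi> (\<lambda>x. f x + g x) = (\<lambda>y. \<phi> f y + \<phi> g y) \<and>
                    \<phi> (\<lambda>x. f x * g x) = (\<lambda>y. \<phi> f y * \<phi> g y)))"

end

theory Submission imports Defs begin

lemma zero_set_sub: "zero_set X g \<subseteq> topspace X"
  by (auto simp: zero_set_def)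

lemma cozero_open: "is_cozero_set X U \<Longrightarrow> openin X U"
proof -
  assume "is_cozero_set X U"
  then obtain g where g: "continuous_map X euclideanreal g" "U = topspace X - zero_set X g"
    unfolding is_cozero_set_def by blast
  have "U = {x \<in> topspace X. g x \<in> - {0}}" using g(2) by (auto simp: zero_set_def)
  moreover have "openin X {x \<in> topspace X. g x \<in> - {0}}"
    by (rule openin_continuous_map_preimage[OF g(1)]) auto
  ultimately show ?thesis by simp
qed

lemma dense_Int:
  assumes "dense_in X U" "dense_in X V" "openin X U"
  shows "dense_in X (U \<inter> V)"
  unfolding dense_in_def
proof
  show "X closure_of (U \<inter> V) \<subseteq> topspace X" by (rule closure_of_subset_topspace)
  show "topspace X \<subseteq> X closure_of (U \<inter> V)"
  proof
    fix x assume x: "x \<in> topspace X"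
    show "x \<in> X closure_of (U \<inter> V)"
      unfolding in_closure_of
    proof (intro conjI allI impI)
      show "x \<in> topspace X" by fact
      fix T assume T: "x \<in> T \<and> openin X T"
      have "x \<in> X closure_of U" using assms(1) x by (simp add: dense_in_def)
      then obtain u where u: "u \<in> U" "u \<in> T" using T by (auto simp: in_closure_of)
      have "openin X (T \<inter> U)" using T assms(3) by blast
      moreover have "u \<in> topspace X" using u T openin_subset by blast
      hence "u \<in> X closure_of V" using assms(2) by (simp add: dense_in_def)
      ultimately obtain v where "v \<in> V" "v \<in> T \<inter> U" using u by (auto simp: in_closure_of)
      then show "\<exists>y. y \<in> U \<inter> V \<and> y \<in> T" by blast
    qed
  qed
qed

lemma T2_common:
  assumes "in_T2 X f" "in_T2 X g"
  obtains U where "is_cozero_set X U" "dense_in X U"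
    "continuous_map (subtopology X U) euclideanreal f"
    "continuous_map (subtopology X U) euclideanreal g"
proof -
  obtain U1 where U1: "is_cozero_set X U1" "dense_in X U1" "continuous_map (subtopology X U1) euclideanreal f"
    using assms(1) unfolding in_T2_def by blast
  obtain U2 where U2: "is_cozero_set X U2" "dense_in X U2" "continuous_map (subtopology X U2) euclideanreal g"
    using assms(2) unfolding in_T2_def by blast
  obtain g1 where g1: "continuous_map X euclideanreal g1" "U1 = topspace X - zero_set X g1"
    using U1(1) unfolding is_cozero_set_def by blast
  obtain g2 where g2: "continuous_map X euclideanreal g2" "U2 = topspace X - zero_set X g2"
    using U2(1) unfolding is_cozero_set_def by blast
  have "is_cozero_set X (U1 \<inter> U2)"
    unfolding is_cozero_set_def
    by (rule exI[of _ "\<lambda>x. g1 x * g2 x"]) (auto simp: g1 g2 zero_set_def continuous_map_real_mult)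
  moreover have "dense_in X (U1 \<inter> U2)" using dense_Int U1 U2 cozero_open by blast
  moreover have "continuous_map (subtopology X (U1 \<inter> U2)) euclideanreal f"
    using U1(3) continuous_map_from_subtopology_mono by blast
  moreover have "continuous_map (subtopology X (U1 \<inter> U2)) euclideanreal g"
    using U2(3) continuous_map_from_subtopology_mono by blast
  ultimately show ?thesis using that by blast
qed

lemma T2_binop:
  assumes "in_T2 X f" "in_T2 X g" "continuous_on UNIV (\<lambda>p::real\<times>real. h (fst p) (snd p))"
  shows "in_T2 X (\<lambda>x. h (f x) (g x))"
proof -
  obtain U where U: "is_cozero_set X U" "dense_in X U"
    "continuous_map (subtopology X U) euclideanreal f"
    "continuous_map (subtopology X U) euclideanreal g"
    using T2_common[OF assms(1,2)] by blast
  have "continuous_map (subtopology X U) (prod_topology euclideanreal euclideanreal) (\<lambda>x. (f x, g x))"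
    using U(3,4) by (rule continuous_map_pairedI)
  moreover have "continuous_map (prod_topology euclideanreal euclideanreal) euclideanreal (\<lambda>p::real\<times>real. h (fst p) (snd p))"
    using assms(3) by (simp add: euclidean_product_topology continuous_map_iff_continuous)
  ultimately have "continuous_map (subtopology X U) euclideanreal ((\<lambda>p::real\<times>real. h (fst p) (snd p)) \<circ> (\<lambda>x. (f x, g x)))"
    by (rule continuous_map_compose)
  then show ?thesis using U unfolding in_T2_def by (auto simp: o_def)
qed

lemma T2_unop:
  assumes "in_T2 X f" "continuous_on UNIV h"
  shows "in_T2 X (\<lambda>x. h (f x))"
proof -
  obtain U where U: "is_cozero_set X U" "dense_in X U" "continuous_map (subtopology X U) euclideanreal f"
    using assms(1) unfolding in_T2_def by blast
  have "continuous_map euclideanreal euclideanreal h" using assms(2) by simp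
  then have "continuous_map (subtopology X U) euclideanreal (h \<circ> f)"
    using U(3) continuous_map_compose by blast
  then show ?thesis using U unfolding in_T2_def by (auto simp: o_def)
qed

lemma T2_const: "in_T2 X (\<lambda>x. c)"
proof -
  have "is_cozero_set X (topspace X)"
    unfolding is_cozero_set_def by (rule exI[of _ "\<lambda>x. 1"]) (auto simp: zero_set_def)
  moreover have "dense_in X (topspace X)" by (simp add: dense_in_def)
  ultimately show ?thesis unfolding in_T2_def by auto
qed

lemma in_T2_cong: "in_T2 X f \<Longrightarrow> (\<And>x. x \<in> topspace X \<Longrightarrow> f x = g x) \<Longrightarrow> in_T2 X g"
  unfolding in_T2_def by (metis continuous_map_eq topspace_subtopology IntE)

definition eX :: "'a topology \<Rightarrow> 'a \<Rightarrow> real" where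
  "eX X = (\<lambda>x. if x \<in> topspace X then 1 else 0)"

lemma A_add: assumes "a \<in> T2_ring X" "b \<in> T2_ring X" shows "(\<lambda>x. a x + b x) \<in> T2_ring X"
proof -
  have "continuous_on UNIV (\<lambda>p::real\<times>real. fst p + snd p)" by (intro continuous_intros)
  then show ?thesis using T2_binop[of X a b "\<lambda>u v. u + v"] assms by (auto simp: T2_ring_def)
qed

lemma A_diff: assumes "a \<in> T2_ring X" "b \<in> T2_ring X" shows "(\<lambda>x. a x - b x) \<in> T2_ring X"
proof -
  have "continuous_on UNIV (\<lambda>p::real\<times>real. fst p - snd p)" by (intro continuous_intros)
  then show ?thesis using T2_binop[of X a b "\<lambda>u v. u - v"] assms by (auto simp: T2_ring_def)
qed

lemma A_mult: assumes "a \<in> T2_ring X" "b \<in> T2_ring X" shows "(\<lambda>x. a x * b x) \<in> T2_ring X"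
proof -
  have "continuous_on UNIV (\<lambda>p::real\<times>real. fst p * snd p)" by (intro continuous_intros)
  then show ?thesis using T2_binop[of X a b "\<lambda>u v. u * v"] assms by (auto simp: T2_ring_def)
qed

lemma A_scale: assumes "a \<in> T2_ring X" shows "(\<lambda>x. c * a x) \<in> T2_ring X"
proof -
  have "continuous_on UNIV (\<lambda>u::real. c * u)" by (intro continuous_intros)
  then show ?thesis using T2_unop[of X a "\<lambda>u. c * u"] assms by (auto simp: T2_ring_def)
qed

lemma A_sqrt: assumes "a \<in> T2_ring X" shows "(\<lambda>x. sqrt (a x)) \<in> T2_ring X"
proof -
  have "continuous_on UNIV sqrt" by (intro continuous_intros)
  then show ?thesis using T2_unop[of X a sqrt] assms by (auto simp: T2_ring_def)
qed

lemma A_zero: "(\<lambda>x. 0) \<in> T2_ring X"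
  unfolding T2_ring_def using T2_const by auto

lemma A_one: "eX X \<in> T2_ring X"
  unfolding T2_ring_def eX_def using in_T2_cong[OF T2_const[of X 1]] by auto

lemma B_one: "eX Y \<in> C_ring Y"
proof -
  have "continuous_map Y euclideanreal (\<lambda>x. 1)" by simp
  then have "continuous_map Y euclideanreal (eX Y)"
    by (rule continuous_map_eq) (simp add: eX_def)
  then show ?thesis unfolding C_ring_def by (simp add: eX_def)
qed

lemma B_sqrt: "b \<in> C_ring Y \<Longrightarrow> (\<lambda>x. sqrt (b x)) \<in> C_ring Y"
  unfolding C_ring_def by (auto intro!: continuous_intros)

context
  fixes \<phi> :: "('a \<Rightarrow> real) \<Rightarrow> ('b \<Rightarrow> real)" and X :: "'a topology" and Y :: "'b topology"
  assumes bij: "bij_betw \<phi> (T2_ring X) (C_ring Y)"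
    and hom: "\<forall>f\<in>T2_ring X. \<forall>g\<in>T2_ring X. \<phi> (\<lambda>x. f x + g x) = (\<lambda>y. \<phi> f y + \<phi> g y) \<and>
                    \<phi> (\<lambda>x. f x * g x) = (\<lambda>y. \<phi> f y * \<phi> g y)"
begin

lemma phi_add: "a \<in> T2_ring X \<Longrightarrow> b \<in> T2_ring X \<Longrightarrow> \<phi> (\<lambda>x. a x + b x) = (\<lambda>y. \<phi> a y + \<phi> b y)"
  using hom by blast

lemma phi_mult: "a \<in> T2_ring X \<Longrightarrow> b \<in> T2_ring X \<Longrightarrow> \<phi> (\<lambda>x. a x * b x) = (\<lambda>y. \<phi> a y * \<phi> b y)"
  using hom by blast

lemma phi_in: "a \<in> T2_ring X \<Longrightarrow> \<phi> a \<in> C_ring Y"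
  using bij by (auto simp: bij_betw_def)

lemma phi_diff:
  assumes "a \<in> T2_ring X" "b \<in> T2_ring X"
  shows "\<phi> (\<lambda>x. a x - b x) = (\<lambda>y. \<phi> a y - \<phi> b y)"
proof -
  have "\<phi> a = \<phi> (\<lambda>x. (a x - b x) + b x)" by simp
  also have "\<dots> = (\<lambda>y. \<phi> (\<lambda>x. a x - b x) y + \<phi> b y)"
    by (rule phi_add[OF A_diff[OF assms] assms(2)])
  finally show ?thesis by (auto simp: fun_eq_iff)
qed

lemma phi_one: "\<phi> (eX X) = eX Y"
proof -
  obtain a where a: "a \<in> T2_ring X" "\<phi> a = eX Y"
    using bij B_one[of Y] by (metis bij_betw_imp_surj_on imageE)
  have "(\<lambda>x. eX X x * a x) = a"
    using a(1) by (auto simp: fun_eq_iff eX_def T2_ring_def)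
  then have "eX Y = (\<lambda>y. \<phi> (eX X) y * eX Y y)"
    using phi_mult[OF A_one a(1)] a(2) by simp
  moreover have "\<phi> (eX X) y = 0" if "y \<notin> topspace Y" for y
    using phi_in[OF A_one] that by (auto simp: C_ring_def)
  ultimately show ?thesis
    by (auto simp: fun_eq_iff eX_def split: if_splits)
qed

lemma phi_zero: "\<phi> (\<lambda>x. 0) = (\<lambda>y. 0)"
  using phi_diff[OF A_zero A_zero] by (simp add: fun_eq_iff)

lemma phi_nat:
  assumes "a \<in> T2_ring X"
  shows "\<phi> (\<lambda>x. real n * a x) = (\<lambda>y. real n * \<phi> a y)"
proof (induction n)
  case 0
  then show ?case using phi_zero by simp
next
  case (Suc n)
  have "(\<lambda>x. real (Suc n) * a x) = (\<lambda>x. real n * a x + a x)" by (simp add: algebra_simps)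
  then have "\<phi> (\<lambda>x. real (Suc n) * a x) = (\<lambda>y. \<phi> (\<lambda>x. real n * a x) y + \<phi> a y)"
    using phi_add[OF A_scale[OF assms] assms] by simp
  then show ?case using Suc by (simp add: algebra_simps)
qed

lemma phi_inv:
  "\<phi> (\<lambda>x. (1 / real (Suc m)) * eX X x) = (\<lambda>y. (1 / real (Suc m)) * eX Y y)"
proof -
  let ?c = "\<lambda>x. (1 / real (Suc m)) * eX X x"
  have c: "?c \<in> T2_ring X" by (rule A_scale[OF A_one])
  have "(\<lambda>x. real (Suc m) * ?c x) = eX X" by (simp add: fun_eq_iff)
  then have "eX Y = (\<lambda>y. real (Suc m) * \<phi> ?c y)"
    using phi_nat[OF c, of "Suc m"] phi_one by simp
  then show ?thesis by (auto simp: fun_eq_iff field_simps)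
qed

lemma phi_pos:
  assumes "a \<in> T2_ring X" "\<And>x. a x \<ge> 0"
  shows "\<phi> a y \<ge> 0"
proof -
  let ?s = "\<lambda>x. sqrt (a x)"
  have "(\<lambda>x. ?s x * ?s x) = a" using assms(2) by (simp add: fun_eq_iff)
  then have "\<phi> a = (\<lambda>y. \<phi> ?s y * \<phi> ?s y)" using phi_mult[OF A_sqrt A_sqrt, OF assms(1) assms(1)] by simp
  then show ?thesis by simp
qed

lemma phi_pos_rev:
  assumes "a \<in> T2_ring X" "\<And>y. \<phi> a y \<ge> 0"
  shows "a x \<ge> 0"
proof -
  have "(\<lambda>y. sqrt (\<phi> a y)) \<in> C_ring Y" by (rule B_sqrt[OF phi_in[OF assms(1)]])
  then obtain s where s: "s \<in> T2_ring X" "\<phi> s = (\<lambda>y. sqrt (\<phi> a y))"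
    using bij by (metis bij_betw_imp_surj_on imageE)
  have "\<phi> (\<lambda>x. s x * s x) = \<phi> a"
    using phi_mult[OF s(1) s(1)] s(2) assms(2) by (simp add: fun_eq_iff)
  moreover have "(\<lambda>x. s x * s x) \<in> T2_ring X" by (rule A_mult[OF s(1) s(1)])
  ultimately have "(\<lambda>x. s x * s x) = a"
    using bij assms(1) by (meson bij_betw_imp_inj_on inj_onD)
  then show ?thesis by (metis zero_le_square)
qed

lemma phi_bound:
  assumes "a \<in> T2_ring X" "\<And>x. x \<in> topspace X \<Longrightarrow> \<bar>a x\<bar> \<le> 1 / real (Suc m)" "y \<in> topspace Y"
  shows "\<bar>\<phi> a y\<bar> \<le> 1 / real (Suc m)"
proof -
  let ?E = "\<lambda>x. (1 / real (Suc m)) * eX X x"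
  have E: "?E \<in> T2_ring X" by (rule A_scale[OF A_one])
  have a0: "a x = 0" if "x \<notin> topspace X" for x using assms(1) that by (auto simp: T2_ring_def)
  have "0 \<le> \<phi> (\<lambda>x. ?E x - a x) y"
    by (rule phi_pos[OF A_diff[OF E assms(1)]]) (use assms(2) a0 in \<open>auto simp: eX_def abs_le_iff\<close>)
  moreover have "0 \<le> \<phi> (\<lambda>x. ?E x + a x) y"
    by (rule phi_pos[OF A_add[OF E assms(1)]]) (use assms(2) a0 in \<open>force simp: eX_def abs_le_iff\<close>)
  ultimately show ?thesis
    using phi_diff[OF E assms(1)] phi_add[OF E assms(1)] phi_inv[of m] assms(3)
    by (auto simp: eX_def)
qed

lemma phi_bound_rev:
  assumes "a \<in> T2_ring X" "\<And>y. y \<in> topspace Y \<Longrightarrow> \<bar>\<phi> a y\<bar> \<le> 1 / real (Suc m)" "x \<in> topspace X"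
  shows "\<bar>a x\<bar> \<le> 1 / real (Suc m)"
proof -
  let ?E = "\<lambda>x. (1 / real (Suc m)) * eX X x"
  have E: "?E \<in> T2_ring X" by (rule A_scale[OF A_one])
  have a0: "\<phi> a y = 0" if "y \<notin> topspace Y" for y using phi_in[OF assms(1)] that by (auto simp: C_ring_def)
  have "0 \<le> ?E x - a x"
    by (rule phi_pos_rev[OF A_diff[OF E assms(1)]])
       (use assms(2) a0 phi_diff[OF E assms(1)] phi_inv[of m] in \<open>auto simp: eX_def abs_le_iff\<close>)
  moreover have "0 \<le> ?E x + a x"
    by (rule phi_pos_rev[OF A_add[OF E assms(1)]])
       (use assms(2) a0 phi_add[OF E assms(1)] phi_inv[of m] in \<open>force simp: eX_def abs_le_iff\<close>)
  ultimately show ?thesis using assms(3) by (auto simp: eX_def)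
qed

end

lemma zero_set_finite:
  assumes "finite F" "\<forall>n\<in>F. is_zero_set X {n}"
  shows "is_zero_set X F"
  using assms
proof (induction F rule: finite_induct)
  case empty
  show ?case unfolding is_zero_set_def
    by (rule exI[of _ "\<lambda>x. 1"]) (auto simp: zero_set_def)
next
  case (insert n F)
  obtain g where g: "continuous_map X euclideanreal g" "F = zero_set X g"
    using insert by (auto simp: is_zero_set_def)
  obtain h where h: "continuous_map X euclideanreal h" "{n} = zero_set X h"
    using insert by (auto simp: is_zero_set_def)
  show ?case unfolding is_zero_set_def
    by (rule exI[of _ "\<lambda>x. h x * g x"])
       (use g h in \<open>auto simp: zero_set_def continuous_map_real_mult\<close>)
qed

context
  fixes X :: "'a topology" and N :: "'a set"
  assumes NX: "N \<subseteq> topspace X" and cN: "countable N"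
    and nd: "\<not> nowhere_dense_in X N"
    and dc: "dense_in X (topspace X - N)"
    and zs: "\<forall>n\<in>N. is_zero_set X {n}"
begin

definition fs :: "nat \<Rightarrow> 'a \<Rightarrow> real" where
  "fs k = (\<lambda>x. if x \<in> N \<and> to_nat_on N x < k then 1 / real (Suc (to_nat_on N x)) else 0)"

definition ff :: "'a \<Rightarrow> real" where
  "ff = (\<lambda>x. if x \<in> N then 1 / real (Suc (to_nat_on N x)) else 0)"

lemma fs_ring: "fs k \<in> T2_ring X"
proof -
  let ?F = "{x \<in> N. to_nat_on N x < k}"
  have "finite ?F"
  proof (rule finite_imageD)
    show "finite (to_nat_on N ` ?F)" by (rule finite_subset[of _ "{..<k}"]) auto
    show "inj_on (to_nat_on N) ?F" using inj_on_to_nat_on[OF cN] by (rule inj_on_subset) auto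
  qed
  then have "is_zero_set X ?F" using zero_set_finite zs by auto
  then obtain g where g: "continuous_map X euclideanreal g" "?F = zero_set X g"
    by (auto simp: is_zero_set_def)
  let ?U = "topspace X - ?F"
  have "is_cozero_set X ?U" unfolding is_cozero_set_def using g by blast
  moreover have "dense_in X ?U"
    using dc closure_of_mono[of "topspace X - N" ?U X] closure_of_subset_topspace[of X ?U]
    unfolding dense_in_def by blast
  moreover have "continuous_map (subtopology X ?U) euclideanreal (fs k)"
    by (rule continuous_map_eq[OF continuous_map_const[THEN iffD2]]) (auto simp: fs_def)
  ultimately have "in_T2 X (fs k)" unfolding in_T2_def by blast
  then show ?thesis using NX unfolding T2_ring_def fs_def by auto
qed

lemma ff_ext: "x \<notin> topspace X \<Longrightarrow> ff x = 0"
  using NX by (auto simp: ff_def)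

lemma ff_bound: "\<bar>ff x - fs k x\<bar> \<le> 1 / real (Suc k)"
  by (auto simp: ff_def fs_def frac_le)

lemma fs_cauchy: "m \<le> k \<Longrightarrow> m \<le> j \<Longrightarrow> \<bar>fs k x - fs j x\<bar> \<le> 1 / real (Suc m)"
  by (auto simp: fs_def frac_le)

lemma ff_not_T2: "\<not> in_T2 X ff"
proof
  assume "in_T2 X ff"
  then obtain U where U: "is_cozero_set X U" "dense_in X U" "continuous_map (subtopology X U) euclideanreal ff"
    unfolding in_T2_def by blast
  have oU: "openin X U" using U(1) cozero_open by blast
  let ?W = "X interior_of (X closure_of N)"
  obtain w where w: "w \<in> ?W"
    using nd unfolding nowhere_dense_in_def by blast
  have oW: "openin X ?W" by simp
  have wt: "w \<in> topspace X" using w openin_subset[OF oW] by (rule subsetD[rotated])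
  then have "w \<in> X closure_of U" using U(2) unfolding dense_in_def by simp
  then have "\<forall>T. w \<in> T \<and> openin X T \<longrightarrow> (\<exists>y. y \<in> U \<and> y \<in> T)" unfolding in_closure_of by simp
  then have "\<exists>y. y \<in> U \<and> y \<in> ?W" using w oW by simp
  then obtain u where u: "u \<in> U" "u \<in> ?W" by blast
  have "u \<in> X closure_of N" using u(2) interior_of_subset[of X "X closure_of N"] by (rule subsetD[rotated])
  then have H: "\<forall>T. u \<in> T \<and> openin X T \<longrightarrow> (\<exists>y. y \<in> N \<and> y \<in> T)" unfolding in_closure_of by simp
  have oUW: "openin X (U \<inter> ?W)" using oU oW by (rule openin_Int)
  have "\<exists>y. y \<in> N \<and> y \<in> U \<inter> ?W" using H[rule_format, of "U \<inter> ?W"] u oUW by blast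
  then obtain n where n: "n \<in> N" "n \<in> U" by blast
  let ?V = "{x \<in> topspace (subtopology X U). ff x \<in> {0<..}}"
  have "openin (subtopology X U) ?V"
    by (rule openin_continuous_map_preimage[OF U(3)]) simp
  then have oV: "openin X ?V" using oU openin_trans_full by blast
  have nX: "n \<in> topspace X" using n(1) NX by blast
  have "ff n > 0" using n(1) by (simp add: ff_def)
  then have nV: "n \<in> ?V" using n(2) nX by simp
  have VN: "?V \<subseteq> N" by (auto simp: ff_def split: if_splits)
  have "n \<in> X closure_of (topspace X - N)" using dc nX unfolding dense_in_def by simp
  then have H2: "\<forall>T. n \<in> T \<and> openin X T \<longrightarrow> (\<exists>y. y \<in> topspace X - N \<and> y \<in> T)" unfolding in_closure_of by simp
  have "\<exists>y. y \<in> topspace X - N \<and> y \<in> ?V" using H2[rule_format, of ?V] oV nV by blast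
  then show False using VN by blast
qed

end

theorem theorem2p4:
  fixes X :: "'a topology" and N :: "'a set"
  assumes "tychonoff_space X"
    and "N \<subseteq> topspace X" and "countable N" and "infinite N"
    and "\<not> nowhere_dense_in X N"
    and "dense_in X (topspace X - N)"
    and "\<forall>n\<in>N. is_zero_set X {n}"
  shows "(\<exists>fs :: nat \<Rightarrow> 'a \<Rightarrow> real. \<exists>f. (\<forall>k. in_T2 X (fs k)) \<and>
            uniform_limit (topspace X) fs f sequentially \<and> \<not> in_T2 X f)
       \<and> (\<forall>Y :: 'b topology. \<not> ring_isomorphic (T2_ring X) (C_ring Y))"
proof -
  note ctx = assms(2,3,5,6,7)
  have fsT: "fs N k \<in> T2_ring X" for k by (rule fs_ring[OF ctx])
  have ulim: "uniform_limit (topspace X) (fs N) (ff N) sequentially"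
    unfolding uniform_limit_iff
  proof (intro allI impI)
    fix \<epsilon> :: real assume "0 < \<epsilon>"
    then obtain M where M: "inverse (real (Suc M)) < \<epsilon>" using reals_Archimedean by blast
    show "\<forall>\<^sub>F k in sequentially. \<forall>x\<in>topspace X. dist (fs N k x) (ff N x) < \<epsilon>"
      unfolding eventually_sequentially
    proof (intro exI allI impI ballI)
      fix k x assume "M \<le> k"
      have "dist (fs N k x) (ff N x) \<le> 1 / real (Suc k)"
        using ff_bound[OF ctx, where x=x and k=k] by (simp add: dist_real_def abs_minus_commute)
      also have "\<dots> \<le> 1 / real (Suc M)" using \<open>M \<le> k\<close> by (simp add: frac_le)
      finally show "dist (fs N k x) (ff N x) < \<epsilon>" using M by (simp add: inverse_eq_divide)
    qed
  qed
  have notT: "\<not> in_T2 X (ff N)" by (rule ff_not_T2[OF ctx])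
  have part1: "\<exists>fs :: nat \<Rightarrow> 'a \<Rightarrow> real. \<exists>f. (\<forall>k. in_T2 X (fs k)) \<and>
            uniform_limit (topspace X) fs f sequentially \<and> \<not> in_T2 X f"
  proof -
    have "\<forall>k. in_T2 X (fs N k)" using fsT by (simp add: T2_ring_def)
    then show ?thesis using ulim notT by blast
  qed
  have part2: "\<not> ring_isomorphic (T2_ring X) (C_ring Y)" for Y :: "'b topology"
  proof
    assume "ring_isomorphic (T2_ring X) (C_ring Y)"
    then obtain \<phi> where bij: "bij_betw \<phi> (T2_ring X) (C_ring Y)"
      and hom: "\<forall>f\<in>T2_ring X. \<forall>g\<in>T2_ring X. \<phi> (\<lambda>x. f x + g x) = (\<lambda>y. \<phi> f y + \<phi> g y) \<and>
                    \<phi> (\<lambda>x. f x * g x) = (\<lambda>y. \<phi> f y * \<phi> g y)"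
      unfolding ring_isomorphic_def by blast
    note iso = bij hom
    define g where "g k = \<phi> (fs N k)" for k
    have gC: "g k \<in> C_ring Y" for k unfolding g_def by (rule phi_in[OF iso fsT])
    have gcau: "\<bar>g k y - g j y\<bar> \<le> 1 / real (Suc m)"
      if "m \<le> k" "m \<le> j" "y \<in> topspace Y" for m k j y
    proof -
      have "\<bar>\<phi> (\<lambda>x. fs N k x - fs N j x) y\<bar> \<le> 1 / real (Suc m)"
        by (rule phi_bound[OF iso A_diff[OF fsT fsT]]) (use fs_cauchy[OF ctx, where m=m and k=k and j=j] that in simp_all)
      then show ?thesis using phi_diff[OF iso fsT fsT] by (simp add: g_def)
    qed
    obtain G where Gc: "continuous_map Y euclideanreal G"
      and Gl: "\<And>\<epsilon>. 0 < \<epsilon> \<Longrightarrow> \<forall>\<^sub>F n in sequentially. \<forall>y\<in>topspace Y. dist (g n y) (G y) < \<epsilon>"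
    proof (rule Met_TC.continuous_map_uniformly_Cauchy_limit)
      show "Met_TC.mcomplete TYPE(real)" by (simp add: complete_UNIV)
      show "\<forall>\<^sub>F n in sequentially. continuous_map Y Met_TC.mtopology (g n)"
        using gC by (simp add: C_ring_def)
      show "\<exists>M. \<forall>m n x. M \<le> m \<longrightarrow> M \<le> n \<longrightarrow> x \<in> topspace Y \<longrightarrow> dist (g m x) (g n x) < \<epsilon>"
        if "\<epsilon> > 0" for \<epsilon>
      proof -
        obtain M where M: "inverse (real (Suc M)) < \<epsilon>" using reals_Archimedean \<open>\<epsilon> > 0\<close> by blast
        show ?thesis
        proof (intro exI allI impI)
          fix m n x assume "M \<le> m" "M \<le> n" "x \<in> topspace Y"
          then have "\<bar>g m x - g n x\<bar> \<le> 1 / real (Suc M)" by (rule gcau)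
          then show "dist (g m x) (g n x) < \<epsilon>" using M by (simp add: dist_real_def inverse_eq_divide)
        qed
      qed
    qed (rule that; simp)
    define h where "h y = (if y \<in> topspace Y then G y else 0)" for y
    have "h \<in> C_ring Y"
      unfolding C_ring_def using continuous_map_eq[OF Gc, of h] by (auto simp: h_def)
    then obtain a where a: "a \<in> T2_ring X" "\<phi> a = h"
      using bij by (metis bij_betw_imp_surj_on imageE)
    have close: "\<bar>a x - ff N x\<bar> \<le> 2 / real (Suc m)" if x: "x \<in> topspace X" for x m
    proof -
      have "0 < 1 / real (Suc m)" by simp
      from Gl[OF this] obtain n0 where n0: "\<And>n y. n \<ge> n0 \<Longrightarrow> y \<in> topspace Y \<Longrightarrow> dist (g n y) (G y) < 1 / real (Suc m)"
        unfolding eventually_sequentially by blast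
      define n where "n = max n0 m"
      have "\<bar>\<phi> (\<lambda>x. a x - fs N n x) y\<bar> \<le> 1 / real (Suc m)" if "y \<in> topspace Y" for y
        using phi_diff[OF iso a(1) fsT[where k=n]] a(2) n0[where n=n and y=y] that
        by (simp add: n_def h_def g_def dist_real_def abs_minus_commute)
      then have "\<bar>a x - fs N n x\<bar> \<le> 1 / real (Suc m)"
        using phi_bound_rev[OF iso A_diff[OF a(1) fsT], where m=m and x=x] x by simp
      moreover have "\<bar>ff N x - fs N n x\<bar> \<le> 1 / real (Suc m)"
        using ff_bound[OF ctx, where x=x and k=n] by (rule order_trans) (simp add: n_def frac_le)
      ultimately show ?thesis by simp
    qed
    have "a x = ff N x" for x
    proof (cases "x \<in> topspace X")
      case False
      then show ?thesis using a(1) ff_ext[OF ctx] by (auto simp: T2_ring_def)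
    next
      case True
      show ?thesis
      proof (rule ccontr)
        assume "a x \<noteq> ff N x"
        then have "0 < \<bar>a x - ff N x\<bar> / 2" by simp
        then obtain m where m: "inverse (real (Suc m)) < \<bar>a x - ff N x\<bar> / 2" using reals_Archimedean by blast
        with close[OF True, of m] show False by (simp add: inverse_eq_divide)
      qed
    qed
    then have "a = ff N" by auto
    then show False using a(1) notT by (simp add: T2_ring_def)
  qed
  show ?thesis using part1 part2 by blast
qed

end
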